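(* Given an $n$-qubit state $\lvert\psi\rangle$, let $\lvert\phi\rangle$ be a stabilizer state that maximizes the stabilizer fidelity, and let $S^* = \mathrm{Weyl}(\lvert\phi\rangle)$. Then \[\sum_{x \in S^*} p_\psi(x) \geq F_\mathcal{S}(\lvert\psi\rangle)^2.\]
   Context: For $x=(a,b)\in\mathbb F_2^{2n}$ the Weyl operator is $W_x = i^{a\cdot b}X^{a_1}Z^{b_1}\otimes\cdots\otimes X^{a_n}Z^{b_n}$; $p_\psi(x)=2^{-n}\langle\psi|W_x|\psi\rangle^2$; $\mathrm{Weyl}(\lvert\phi\rangle)=\{x\in\mathbb F_2^{2n}: W_x\lvert\phi\rangle=\pm\lvert\phi\rangle\}$; $F_\mathcal{S}(\lvert\psi\rangle)=\max_{\lvert\phi\rangle\text{ stabilizer}}\lvert\langle\phi|\psi\rangle\rvert^2$. *)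

theory Defs
  imports "Jordan_Normal_Form.Schur_Decomposition"
begin

text \<open>A computational basis index z < 2^n is read
  as a bit string, qubit k (k < n) being bit k of z. A point x = (a,b) of F_2^(2n) is
  encoded as a pair of naturals a, b < 2^n (bit strings of length n).\<close>

definition qdim :: "nat \<Rightarrow> nat" where "qdim n = 2 ^ n"

definition is_state :: "nat \<Rightarrow> complex vec \<Rightarrow> bool" where
  "is_state n v \<longleftrightarrow> dim_vec v = qdim n \<and> (\<Sum>i<qdim n. (cmod (v $ i))\<^sup>2) = 1"

definition braket :: "complex vec \<Rightarrow> complex vec \<Rightarrow> complex" where
  "braket u v = (\<Sum>i<dim_vec v. cnj (u $ i) * v $ i)"

definition weyl_index :: "nat \<Rightarrow> (nat \<times> nat) set" where
  "weyl_index n = {(a, b). a < qdim n \<and> b < qdim n}"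

definition bdot :: "nat \<Rightarrow> nat \<Rightarrow> nat \<Rightarrow> nat" where
  "bdot n a b = card {k. k < n \<and> bit a k \<and> bit b k}"

text \<open>W_x = i^(a.b) X^a1 Z^b1 (x) ... (x) X^an Z^bn; on basis states
  W_x |z> = i^(a.b) (-1)^(b.z) |z xor a>.\<close>
definition weyl_op :: "nat \<Rightarrow> nat \<times> nat \<Rightarrow> complex mat" where
  "weyl_op n x = (case x of (a, b) \<Rightarrow>
     mat (qdim n) (qdim n) (\<lambda>(w, z).
       if w = Bit_Operations.xor z a then \<i> ^ bdot n a b * (- 1) ^ bdot n b z else 0))"

definition p_psi :: "nat \<Rightarrow> complex vec \<Rightarrow> nat \<times> nat \<Rightarrow> real" where
  "p_psi n psi x = Re ((braket psi (weyl_op n x *\<^sub>v psi))\<^sup>2) / 2 ^ n"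

definition weyl_set :: "nat \<Rightarrow> complex vec \<Rightarrow> (nat \<times> nat) set" where
  "weyl_set n phi = {x \<in> weyl_index n.
     weyl_op n x *\<^sub>v phi = phi \<or> weyl_op n x *\<^sub>v phi = - phi}"

definition unitary_mat :: "nat \<Rightarrow> complex mat \<Rightarrow> bool" where
  "unitary_mat N U \<longleftrightarrow> U \<in> carrier_mat N N \<and> U * mat_adjoint U = 1\<^sub>m N"

text \<open>Clifford group: unitaries mapping Pauli (Weyl) operators to Pauli operators under
  conjugation (up to sign, since the W_x are Hermitian).\<close>
definition clifford :: "nat \<Rightarrow> complex mat \<Rightarrow> bool" where
  "clifford n U \<longleftrightarrow> unitary_mat (qdim n) U \<and>
     (\<forall>x \<in> weyl_index n. \<exists>y \<in> weyl_index n. \<exists>s \<in> {1, -1 :: complex}.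
        U * weyl_op n x * mat_adjoint U = s \<cdot>\<^sub>m weyl_op n y)"

definition stabilizer_state :: "nat \<Rightarrow> complex vec \<Rightarrow> bool" where
  "stabilizer_state n phi \<longleftrightarrow> (\<exists>U. clifford n U \<and> phi = U *\<^sub>v unit_vec (qdim n) 0)"

definition stab_fidelity :: "nat \<Rightarrow> complex vec \<Rightarrow> real" where
  "stab_fidelity n psi = Sup {(cmod (braket phi psi))\<^sup>2 | phi. stabilizer_state n phi}"

end

theory Submission
  imports Defs
begin

lemma par_symdiff:
  assumes "finite A" "finite B"
  shows "(-1::'a::comm_ring_1) ^ card ((A - B) \<union> (B - A)) = (-1) ^ card A * (-1) ^ card B"
proof -
  have d: "card ((A - B) \<union> (B - A)) = card (A - B) + card (B - A)"
    by (rule card_Un_disjoint) (use assms in auto)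
  have a: "card A = card (A - B) + card (A \<inter> B)"
    using card_Int_Diff[OF assms(1), of B] by simp
  have b: "card B = card (B - A) + card (A \<inter> B)"
    using card_Int_Diff[OF assms(2), of A] by (simp add: Int_commute)
  have "(-1::'a) ^ card A * (-1) ^ card B = (-1) ^ (card (A - B) + card (B - A)) * ((-1) ^ card (A \<inter> B))\<^sup>2"
    unfolding a b by (simp add: power_add power2_eq_square algebra_simps)
  also have "((-1::'a) ^ card (A \<inter> B))\<^sup>2 = 1"
    by (simp add: power_mult_distrib flip: power_mult)
  finally show ?thesis using d by simp
qed

lemma bdot_xor:
  "(-1::'a::comm_ring_1) ^ bdot n b (Bit_Operations.xor z a) = (-1) ^ bdot n b z * (-1) ^ bdot n a b"
proof -
  let ?A = "{k. k < n \<and> bit b k \<and> bit z k}" and ?B = "{k. k < n \<and> bit a k \<and> bit b k}"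
  have "{k. k < n \<and> bit b k \<and> bit (Bit_Operations.xor z a) k} = (?A - ?B) \<union> (?B - ?A)"
    by (auto simp: bit_xor_iff)
  then show ?thesis unfolding bdot_def by (simp add: par_symdiff)
qed

lemma bdot_sym: "bdot n a b = bdot n b a"
  unfolding bdot_def by (simp add: conj_commute)

lemma xor_lt: "(b::nat) < 2 ^ n \<Longrightarrow> c < 2 ^ n \<Longrightarrow> Bit_Operations.xor b c < 2 ^ n"
  by (metis take_bit_nat_eq_self_iff take_bit_xor)

lemma bit_lt: "(z::nat) < 2 ^ n \<Longrightarrow> bit z k \<Longrightarrow> k < n"
  by (metis bit_take_bit_iff take_bit_nat_eq_self_iff)

lemma bdot_zero: "bdot n b 0 = 0" "bdot n 0 b = 0"
  unfolding bdot_def by auto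

lemma bdot_pow: "k < n \<Longrightarrow> bdot n b (2 ^ k) = (if bit b k then 1 else 0)"
proof -
  assume k: "k < n"
  have "{j. j < n \<and> bit b j \<and> bit ((2::nat) ^ k) j} = (if bit b k then {k} else {})"
    using k by (auto simp: bit_exp_iff)
  then show ?thesis unfolding bdot_def by simp
qed

lemma char_sum:
  assumes z: "z < 2 ^ n"
  shows "(\<Sum>b<2^n. (-1::real) ^ bdot n b z) = (if z = 0 then 2 ^ n else 0)"
proof (cases "z = 0")
  case True then show ?thesis by (simp add: bdot_zero)
next
  case False
  then obtain k where bk: "bit z k" using bit_eq_iff[of z 0] by auto
  have kn: "k < n" using bit_lt[OF z bk] .
  have p: "(2::nat) ^ k < 2 ^ n" using kn by simp
  let ?g = "\<lambda>b. (-1::real) ^ bdot n b z"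
  have inv: "Bit_Operations.xor (Bit_Operations.xor a (2^k)) (2^k) = a" for a :: nat
    by (simp add: xor.assoc)
  have rng: "Bit_Operations.xor a (2^k) \<in> {..<2^n}" if "a \<in> {..<(2::nat)^n}" for a
    using xor_lt[OF _ p] that by simp
  have val: "- ?g (Bit_Operations.xor a (2^k)) = ?g a" for a
  proof -
    have "(-1::real) ^ bdot n (Bit_Operations.xor a (2^k)) z = (-1) ^ bdot n z a * (-1) ^ bdot n (2^k) z"
      by (simp add: bdot_sym[of n _ z] bdot_xor)
    also have "bdot n (2^k) z = 1" using bdot_pow[OF kn, of z] bk by (simp add: bdot_sym)
    finally show ?thesis by (simp add: bdot_sym)
  qed
  have "sum ?g {..<2^n} = sum (\<lambda>b. - ?g b) {..<2^n}"
    by (rule sum.reindex_bij_witness[where i = "\<lambda>b. Bit_Operations.xor b (2^k)" and j = "\<lambda>b. Bit_Operations.xor b (2^k)"])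
      (use inv rng val in auto)
  then have "sum ?g {..<2^n} = 0" by (simp add: sum_negf)
  then show ?thesis using False by simp
qed

lemma cs_sum:
  fixes c :: "'b \<Rightarrow> real"
  assumes "finite B"
  shows "(\<Sum>b\<in>B. c b)\<^sup>2 \<le> card B * (\<Sum>b\<in>B. (c b)\<^sup>2)"
proof -
  have "0 \<le> (\<Sum>a\<in>B. \<Sum>b\<in>B. (c a - c b)\<^sup>2)" by (intro sum_nonneg) auto
  also have "\<dots> = 2 * (card B * (\<Sum>b\<in>B. (c b)\<^sup>2)) - 2 * (\<Sum>b\<in>B. c b)\<^sup>2"
    by (simp add: power2_diff sum.distrib sum_subtractf sum_distrib_left sum_distrib_right power2_eq_square algebra_simps)
  finally show ?thesis by simp
qed

lemma adj_carrier: "A \<in> carrier_mat N M \<Longrightarrow> mat_adjoint A \<in> carrier_mat M N"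
  unfolding mat_adjoint_def by auto

lemma adj_index: "A \<in> carrier_mat N M \<Longrightarrow> i < M \<Longrightarrow> j < N \<Longrightarrow> mat_adjoint A $$ (i, j) = cnj (A $$ (j, i))"
  unfolding mat_adjoint_def by (simp add: mat_of_rows_index)

lemma mv_index: "A \<in> carrier_mat N M \<Longrightarrow> dim_vec v = M \<Longrightarrow> i < N \<Longrightarrow> (A *\<^sub>v v) $ i = (\<Sum>j<M. A $$ (i, j) * v $ j)"
  by (simp add: scalar_prod_def lessThan_atLeast0)

lemma braket_adj:
  assumes A: "A \<in> carrier_mat N N" and u: "dim_vec u = N" and w: "dim_vec w = N"
  shows "braket u (A *\<^sub>v w) = braket (mat_adjoint A *\<^sub>v u) w"
proof -
  have "braket u (A *\<^sub>v w) = (\<Sum>i<N. cnj (u $ i) * (\<Sum>j<N. A $$ (i, j) * w $ j))"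
    unfolding braket_def using A w by (simp add: scalar_prod_def lessThan_atLeast0)
  also have "\<dots> = (\<Sum>i<N. \<Sum>j<N. cnj (u $ i) * A $$ (i, j) * w $ j)"
    by (simp add: sum_distrib_left mult.assoc)
  also have "\<dots> = (\<Sum>j<N. \<Sum>i<N. cnj (u $ i) * A $$ (i, j) * w $ j)"
    by (rule sum.swap)
  also have "\<dots> = (\<Sum>j<N. cnj (\<Sum>i<N. cnj (A $$ (i, j)) * u $ i) * w $ j)"
    by (simp add: sum_distrib_right sum_distrib_left mult.commute)
  also have "\<dots> = braket (mat_adjoint A *\<^sub>v u) w"
  proof -
    have "(mat_adjoint A *\<^sub>v u) $ j = (\<Sum>i<N. cnj (A $$ (i, j)) * u $ i)" if "j < N" for j
      using that by (subst mv_index[OF adj_carrier[OF A] u]) (auto intro!: sum.cong simp: adj_index[OF A])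
    then show ?thesis unfolding braket_def using A u w adj_carrier[OF A] by simp
  qed
  finally show ?thesis .
qed

lemma herm_real:
  assumes M: "M \<in> carrier_mat N N" and h: "\<And>i j. i < N \<Longrightarrow> j < N \<Longrightarrow> M $$ (i, j) = cnj (M $$ (j, i))"
    and v: "dim_vec v = N"
  shows "cnj (braket v (M *\<^sub>v v)) = braket v (M *\<^sub>v v)"
proof -
  have "braket v (M *\<^sub>v v) = (\<Sum>i<N. \<Sum>j<N. cnj (v $ i) * M $$ (i, j) * v $ j)"
    unfolding braket_def using M v by (simp add: scalar_prod_def lessThan_atLeast0 sum_distrib_left mult.assoc)
  moreover have "cnj (\<Sum>i<N. \<Sum>j<N. cnj (v $ i) * M $$ (i, j) * v $ j) = (\<Sum>i<N. \<Sum>j<N. cnj (v $ i) * M $$ (i, j) * v $ j)"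
  proof -
    have h': "cnj (M $$ (i, j)) = M $$ (j, i)" if "i < N" "j < N" for i j
      using h[OF that(2,1)] by simp
    have "cnj (\<Sum>i<N. \<Sum>j<N. cnj (v $ i) * M $$ (i, j) * v $ j) = (\<Sum>i<N. \<Sum>j<N. v $ i * cnj (M $$ (i, j)) * cnj (v $ j))"
      by simp
    also have "\<dots> = (\<Sum>i<N. \<Sum>j<N. v $ i * M $$ (j, i) * cnj (v $ j))"
      by (intro sum.cong refl) (simp add: h')
    also have "\<dots> = (\<Sum>j<N. \<Sum>i<N. v $ i * M $$ (j, i) * cnj (v $ j))" by (rule sum.swap)
    finally show ?thesis by (simp add: mult.commute mult.left_commute)
  qed
  ultimately show ?thesis by simp
qed

lemma weyl_carrier: "weyl_op n x \<in> carrier_mat (qdim n) (qdim n)"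
  unfolding weyl_op_def by (cases x) auto

lemma weyl_herm:
  assumes "i < qdim n" "j < qdim n"
  shows "weyl_op n x $$ (i, j) = cnj (weyl_op n x $$ (j, i))"
proof -
  obtain a b where x: "x = (a, b)" by (cases x)
  have e: "(i = Bit_Operations.xor j a) = (j = Bit_Operations.xor i a)"
    by (auto simp: xor.assoc)
  have c: "cnj (\<i> ^ m) = (-1) ^ m * \<i> ^ m" for m :: nat
    by (simp add: power_mult_distrib[symmetric])
  show ?thesis
  proof (cases "i = Bit_Operations.xor j a")
    case True
    have "cnj (\<i> ^ bdot n a b * (- 1) ^ bdot n b i) = \<i> ^ bdot n a b * (- 1) ^ bdot n b j"
      using True by (simp add: c bdot_xor power_mult_distrib[symmetric] mult_ac)
    then show ?thesis using assms True e unfolding weyl_op_def x by simp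
  next
    case False
    then show ?thesis using assms e unfolding weyl_op_def x by simp
  qed
qed

lemma Z_index: "i < qdim n \<Longrightarrow> j < qdim n \<Longrightarrow>
   weyl_op n (0, b) $$ (i, j) = (if i = j then (-1) ^ bdot n b j else 0)"
  unfolding weyl_op_def by (simp add: bdot_zero)

lemma Z_mult:
  assumes v: "dim_vec v = qdim n"
  shows "weyl_op n (0, b) *\<^sub>v v = vec (qdim n) (\<lambda>w. (-1) ^ bdot n b w * v $ w)"
proof (rule eq_vecI)
  show "dim_vec (weyl_op n (0, b) *\<^sub>v v) = dim_vec (vec (qdim n) (\<lambda>w. (-1) ^ bdot n b w * v $ w))"
    using weyl_carrier[of n "(0,b)"] by simp
  fix i assume "i < dim_vec (vec (qdim n) (\<lambda>w. (-1) ^ bdot n b w * v $ w))"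
  then have i: "i < qdim n" by simp
  have "(weyl_op n (0, b) *\<^sub>v v) $ i = (\<Sum>j<qdim n. (if i = j then (-1) ^ bdot n b j else 0) * v $ j)"
    using i by (subst mv_index[OF weyl_carrier v]) (auto intro!: sum.cong simp: Z_index)
  also have "\<dots> = (\<Sum>j<qdim n. if i = j then (-1) ^ bdot n b j * v $ j else 0)"
    by (intro sum.cong) auto
  also have "\<dots> = (-1) ^ bdot n b i * v $ i" using i by (simp add: sum.delta)
  finally show "(weyl_op n (0, b) *\<^sub>v v) $ i = vec (qdim n) (\<lambda>w. (-1) ^ bdot n b w * v $ w) $ i"
    using i by simp
qed

lemma braket_Z:
  assumes v: "dim_vec v = qdim n"
  shows "braket v (weyl_op n (0, b) *\<^sub>v v) = complex_of_real (\<Sum>z<qdim n. (cmod (v $ z))\<^sup>2 * (-1) ^ bdot n b z)"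
proof -
  have "braket v (weyl_op n (0, b) *\<^sub>v v) = (\<Sum>z<qdim n. cnj (v $ z) * ((-1) ^ bdot n b z * v $ z))"
    unfolding braket_def using v by (simp add: Z_mult)
  also have "\<dots> = (\<Sum>z<qdim n. complex_of_real ((cmod (v $ z))\<^sup>2 * (-1) ^ bdot n b z))"
  proof (intro sum.cong refl)
    fix z
    show "cnj (v $ z) * ((-1) ^ bdot n b z * v $ z) = complex_of_real ((cmod (v $ z))\<^sup>2 * (-1) ^ bdot n b z)"
      unfolding of_real_mult complex_norm_square by (simp add: mult_ac)
  qed
  finally show ?thesis by simp
qed

lemma Z_e0: "weyl_op n (0, b) *\<^sub>v unit_vec (qdim n) 0 = unit_vec (qdim n) 0"
  by (rule eq_vecI) (auto simp: Z_mult bdot_zero)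

lemma p_nonneg:
  assumes "dim_vec psi = qdim n"
  shows "0 \<le> p_psi n psi x"
proof -
  let ?c = "braket psi (weyl_op n x *\<^sub>v psi)"
  have "cnj ?c = ?c" by (rule herm_real[OF weyl_carrier _ assms]) (rule weyl_herm)
  then have "Im ?c = 0" by (metis cnj.sel(2) complex_eq_iff neg_equal_zero)
  then have "Re (?c\<^sup>2) = (Re ?c)\<^sup>2" by (simp add: power2_eq_square)
  then show ?thesis unfolding p_psi_def by simp
qed

lemma Z_inj:
  assumes b: "b < qdim n" and b': "b' < qdim n" and eq: "weyl_op n (0, b) = t \<cdot>\<^sub>m weyl_op n (0, b')"
  shows "b = b'"
proof -
  have N0: "0 < qdim n" by (simp add: qdim_def)
  have ent: "weyl_op n (0, b) $$ (i, i) = t * weyl_op n (0, b') $$ (i, i)" if "i < qdim n" for i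
    using that eq weyl_carrier[of n "(0,b')"] by (metis carrier_matD(1,2) index_smult_mat(1))
  from ent[OF N0] have t: "t = 1" using N0 by (simp add: Z_index bdot_zero)
  show ?thesis
  proof (rule bit_eqI)
    fix k
    show "bit b k = bit b' k"
    proof (cases "k < n")
      case True
      have "(2::nat) ^ k < qdim n" using True by (simp add: qdim_def)
      from ent[OF this] have "(-1::complex) ^ bdot n b (2^k) = (-1) ^ bdot n b' (2^k)"
        using \<open>2 ^ k < qdim n\<close> t by (simp add: Z_index)
      then show ?thesis using True by (simp add: bdot_pow split: if_splits)
    next
      case False
      then show ?thesis using bit_lt[of b n k] bit_lt[of b' n k] b b' by (auto simp: qdim_def)
    qed
  qed
qed

lemma one_smat: "1 \<cdot>\<^sub>m A = (A :: complex mat)"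
  by (intro eq_matI) auto

lemma smat_mv: "dim_vec w = dim_col A \<Longrightarrow> (k \<cdot>\<^sub>m A) *\<^sub>v w = k \<cdot>\<^sub>v (A *\<^sub>v (w :: complex vec))"
  by (intro eq_vecI) (auto simp: scalar_prod_def sum_distrib_left ac_simps)

lemma smat_smat: "k \<cdot>\<^sub>m (l \<cdot>\<^sub>m A) = (k * l) \<cdot>\<^sub>m (A :: complex mat)"
  by (intro eq_matI) auto

lemma braket_smult: "braket u (k \<cdot>\<^sub>v w) = k * braket u w"
  unfolding braket_def by (simp add: sum_distrib_left ac_simps)

lemma conj_back:
  assumes U: "U \<in> carrier_mat N N" and Ua: "Ua \<in> carrier_mat N N" and M: "M \<in> carrier_mat N N"
    and inv: "Ua * U = 1\<^sub>m N"
  shows "Ua * (U * M * Ua) * U = (M :: complex mat)"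
proof -
  have "Ua * (U * M * Ua) * U = (Ua * U) * M * (Ua * U)"
    using U Ua M by (simp add: assoc_mult_mat[of _ N N _ N _ N])
  also have "\<dots> = M" using inv M by simp
  finally show ?thesis .
qed

theorem lemma5p2:
  fixes n :: nat and psi phi :: "complex vec"
  assumes "is_state n psi"
    and "stabilizer_state n phi"
    and "\<forall>phi'. stabilizer_state n phi' \<longrightarrow>
           (cmod (braket phi' psi))\<^sup>2 \<le> (cmod (braket phi psi))\<^sup>2"
  shows "(\<Sum>x \<in> weyl_set n phi. p_psi n psi x) \<ge> (stab_fidelity n psi)\<^sup>2"
proof -
  let ?N = "qdim n"
  have N0: "0 < ?N" by (simp add: qdim_def)
  have dpsi: "dim_vec psi = ?N" using assms(1) is_state_def by auto
  obtain U where cl: "clifford n U" and phi: "phi = U *\<^sub>v unit_vec ?N 0"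
    using assms(2) stabilizer_state_def by auto
  have U: "U \<in> carrier_mat ?N ?N" and UU: "U * mat_adjoint U = 1\<^sub>m ?N"
    using cl clifford_def unitary_mat_def by auto
  have Ua: "mat_adjoint U \<in> carrier_mat ?N ?N" using adj_carrier[OF U] .
  have UaU: "mat_adjoint U * U = 1\<^sub>m ?N" using mat_mult_left_right_inverse[OF U Ua UU] .
  define Z where "Z b = weyl_op n (0, b)" for b
  have Zc: "Z b \<in> carrier_mat ?N ?N" for b unfolding Z_def by (rule weyl_carrier)
  have "\<forall>b\<in>{..<?N}. \<exists>p. fst p \<in> weyl_index n \<and> snd p \<in> {1, -1::complex} \<and>
      U * Z b * mat_adjoint U = snd p \<cdot>\<^sub>m weyl_op n (fst p)"
  proof
    fix b assume "b \<in> {..<?N}"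
    then have "(0, b) \<in> weyl_index n" using N0 by (simp add: weyl_index_def)
    then obtain y s where "y \<in> weyl_index n" "s \<in> {1, -1::complex}" "U * Z b * mat_adjoint U = s \<cdot>\<^sub>m weyl_op n y"
      using cl unfolding clifford_def Z_def by blast
    then show "\<exists>p. fst p \<in> weyl_index n \<and> snd p \<in> {1, -1::complex} \<and>
      U * Z b * mat_adjoint U = snd p \<cdot>\<^sub>m weyl_op n (fst p)"
      by (intro exI[of _ "(y, s)"]) auto
  qed
  from bchoice[OF this] obtain f where f: "\<forall>b\<in>{..<?N}. fst (f b) \<in> weyl_index n \<and> snd (f b) \<in> {1, -1::complex} \<and>
      U * Z b * mat_adjoint U = snd (f b) \<cdot>\<^sub>m weyl_op n (fst (f b))" by blast
  define y where "y b = fst (f b)" for b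
  define s where "s b = snd (f b)" for b
  have ys: "y b \<in> weyl_index n" "s b \<in> {1, -1}" "U * Z b * mat_adjoint U = s b \<cdot>\<^sub>m weyl_op n (y b)"
    if "b < ?N" for b using f that unfolding y_def s_def by auto
  have s2: "s b * s b = 1" if "b < ?N" for b using ys(2)[OF that] by auto
  have Wy: "weyl_op n (y b) = s b \<cdot>\<^sub>m (U * Z b * mat_adjoint U)" if b: "b < ?N" for b
  proof -
    have "s b \<cdot>\<^sub>m (U * Z b * mat_adjoint U) = s b \<cdot>\<^sub>m (s b \<cdot>\<^sub>m weyl_op n (y b))"
      by (simp only: ys(3)[OF b])
    also have "\<dots> = weyl_op n (y b)" by (simp only: smat_smat s2[OF b] one_smat)
    finally show ?thesis by simp
  qed
  have Wyv: "weyl_op n (y b) *\<^sub>v w = s b \<cdot>\<^sub>v (U *\<^sub>v (Z b *\<^sub>v (mat_adjoint U *\<^sub>v w)))"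
    if b: "b < ?N" and w: "dim_vec w = ?N" for b w
  proof -
    have wc: "w \<in> carrier_vec ?N" using w by (rule carrier_vecI)
    have UZ: "U * Z b \<in> carrier_mat ?N ?N" using U Zc[of b] by auto
    have "(U * Z b * mat_adjoint U) *\<^sub>v w = (U * Z b) *\<^sub>v (mat_adjoint U *\<^sub>v w)"
      by (rule assoc_mult_mat_vec[OF UZ Ua wc])
    also have "\<dots> = U *\<^sub>v (Z b *\<^sub>v (mat_adjoint U *\<^sub>v w))"
      by (rule assoc_mult_mat_vec[OF U Zc]) (use Ua wc in auto)
    finally have "(U * Z b * mat_adjoint U) *\<^sub>v w = U *\<^sub>v (Z b *\<^sub>v (mat_adjoint U *\<^sub>v w))" .
    moreover have "dim_vec w = dim_col (U * Z b * mat_adjoint U)" using w Ua by simp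
    ultimately show ?thesis using Wy[OF b] by (simp add: smat_mv)
  qed
  define v where "v = mat_adjoint U *\<^sub>v psi"
  have dv: "dim_vec v = ?N" using Ua by (simp add: v_def)
  define c where "c b = (\<Sum>z<?N. (cmod (v $ z))\<^sup>2 * (-1) ^ bdot n b z)" for b
  have bc: "braket psi (weyl_op n (y b) *\<^sub>v psi) = s b * complex_of_real (c b)" if b: "b < ?N" for b
  proof -
    have "braket psi (weyl_op n (y b) *\<^sub>v psi) = s b * braket psi (U *\<^sub>v (Z b *\<^sub>v v))"
      unfolding v_def by (simp only: Wyv[OF b dpsi] braket_smult)
    also have "braket psi (U *\<^sub>v (Z b *\<^sub>v v)) = braket v (Z b *\<^sub>v v)"
      unfolding v_def by (rule braket_adj[OF U dpsi]) (use Zc[of b] dv v_def in simp)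
    also have "\<dots> = complex_of_real (c b)" unfolding Z_def c_def by (rule braket_Z[OF dv])
    finally show ?thesis .
  qed
  have pc: "p_psi n psi (y b) = (c b)\<^sup>2 / 2 ^ n" if b: "b < ?N" for b
  proof -
    have "(s b * complex_of_real (c b))\<^sup>2 = complex_of_real ((c b)\<^sup>2)"
      using s2[OF b] by (simp add: power2_eq_square algebra_simps)
    then show ?thesis unfolding p_psi_def bc[OF b] by (simp only: Re_complex_of_real)
  qed
  have e0: "dim_vec (unit_vec ?N 0) = ?N" by simp
  have yin: "y b \<in> weyl_set n phi" if b: "b < ?N" for b
  proof -
    have dphi: "dim_vec phi = ?N" using U phi by simp
    have "mat_adjoint U *\<^sub>v phi = unit_vec ?N 0"
      unfolding phi by (simp only: assoc_mult_mat_vec[symmetric, OF Ua U unit_vec_carrier] UaU one_mult_mat_vec[OF unit_vec_carrier])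
    then have "weyl_op n (y b) *\<^sub>v phi = s b \<cdot>\<^sub>v phi"
      using Wyv[OF b dphi] phi by (simp add: Z_def Z_e0)
    moreover have "s b \<cdot>\<^sub>v phi = phi \<or> s b \<cdot>\<^sub>v phi = - phi"
      using ys(2)[OF b] by (auto intro!: eq_vecI)
    ultimately show ?thesis using ys(1)[OF b] unfolding weyl_set_def by auto
  qed
  have yinj: "inj_on y {..<?N}"
  proof (rule inj_onI)
    fix b b' assume b: "b \<in> {..<?N}" and b': "b' \<in> {..<?N}" and e: "y b = y b'"
    have "U * Z b * mat_adjoint U = (s b * s b') \<cdot>\<^sub>m (U * Z b' * mat_adjoint U)"
    proof -
      have bb: "b < ?N" "b' < ?N" using b b' by auto
      have "(s b * s b') \<cdot>\<^sub>m (U * Z b' * mat_adjoint U) = (s b * s b') \<cdot>\<^sub>m (s b' \<cdot>\<^sub>m weyl_op n (y b'))"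
        by (simp only: ys(3)[OF bb(2)])
      also have "\<dots> = (s b * (s b' * s b')) \<cdot>\<^sub>m weyl_op n (y b')" by (simp only: smat_smat mult.assoc)
      also have "\<dots> = s b \<cdot>\<^sub>m weyl_op n (y b)" using s2[OF bb(2)] e by simp
      also have "\<dots> = U * Z b * mat_adjoint U" using ys(3)[OF bb(1)] by simp
      finally show ?thesis by simp
    qed
    then have eq1: "mat_adjoint U * (U * Z b * mat_adjoint U) * U
        = mat_adjoint U * ((s b * s b') \<cdot>\<^sub>m (U * Z b' * mat_adjoint U)) * U"
      by (rule arg_cong[where f = "\<lambda>M. mat_adjoint U * M * U"])
    have Xc: "U * Z b' * mat_adjoint U \<in> carrier_mat ?N ?N" using U Ua Zc[of b'] by auto
    have UaXc: "mat_adjoint U * (U * Z b' * mat_adjoint U) \<in> carrier_mat ?N ?N" using Ua Xc by auto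
    have "mat_adjoint U * (U * Z b * mat_adjoint U) * U = mat_adjoint U * ((s b * s b') \<cdot>\<^sub>m (U * Z b' * mat_adjoint U)) * U" by (rule eq1)
    also have "\<dots> = ((s b * s b') \<cdot>\<^sub>m (mat_adjoint U * (U * Z b' * mat_adjoint U))) * U"
      by (simp only: mult_smult_distrib[OF Ua Xc])
    also have "\<dots> = (s b * s b') \<cdot>\<^sub>m (mat_adjoint U * (U * Z b' * mat_adjoint U) * U)"
      by (rule mult_smult_assoc_mat[OF UaXc U])
    finally have "Z b = (s b * s b') \<cdot>\<^sub>m Z b'"
      by (simp only: conj_back[OF U Ua Zc UaU])
    then show "b = b'" using Z_inj b b' unfolding Z_def by auto
  qed
  have bra0: "braket phi psi = v $ 0"
  proof -
    have "psi = U *\<^sub>v v"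
      unfolding v_def by (simp only: assoc_mult_mat_vec[symmetric, OF U Ua carrier_vecI[OF dpsi]] UU one_mult_mat_vec[OF carrier_vecI[OF dpsi]])
    then have "braket phi psi = braket (mat_adjoint U *\<^sub>v phi) v"
      using braket_adj[OF U _ dv, of phi] U phi by simp
    also have "mat_adjoint U *\<^sub>v phi = unit_vec ?N 0"
      unfolding phi by (simp only: assoc_mult_mat_vec[symmetric, OF Ua U unit_vec_carrier] UaU one_mult_mat_vec[OF unit_vec_carrier])
    also have "braket (unit_vec ?N 0) v = (\<Sum>i<?N. if i = 0 then v $ i else 0)"
      unfolding braket_def using dv by (intro sum.cong) auto
    also have "\<dots> = v $ 0" using N0 by simp
    finally show ?thesis .
  qed
  have fid: "stab_fidelity n psi = (cmod (v $ 0))\<^sup>2"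
    unfolding stab_fidelity_def
  proof (rule cSup_eq_maximum)
    show "(cmod (v $ 0))\<^sup>2 \<in> {(cmod (braket phi psi))\<^sup>2 |phi. stabilizer_state n phi}"
      using assms(2) bra0 by (auto intro!: exI[of _ phi])
    fix x assume "x \<in> {(cmod (braket phi psi))\<^sup>2 |phi. stabilizer_state n phi}"
    then obtain p where "x = (cmod (braket p psi))\<^sup>2" "stabilizer_state n p" by blast
    then show "x \<le> (cmod (v $ 0))\<^sup>2" using assms(3) bra0 by simp
  qed
  have sumc: "(\<Sum>b<?N. c b) = ?N * (cmod (v $ 0))\<^sup>2"
  proof -
    have "(\<Sum>b<?N. c b) = (\<Sum>z<?N. (cmod (v $ z))\<^sup>2 * (\<Sum>b<?N. (-1::real) ^ bdot n b z))"
    proof -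
      have "(\<Sum>b<?N. c b) = (\<Sum>b<?N. \<Sum>z<?N. (cmod (v $ z))\<^sup>2 * (-1::real) ^ bdot n b z)"
        unfolding c_def ..
      also have "\<dots> = (\<Sum>z<?N. \<Sum>b<?N. (cmod (v $ z))\<^sup>2 * (-1::real) ^ bdot n b z)"
        by (rule sum.swap)
      also have "\<dots> = (\<Sum>z<?N. (cmod (v $ z))\<^sup>2 * (\<Sum>b<?N. (-1::real) ^ bdot n b z))"
        by (simp only: sum_distrib_left)
      finally show ?thesis .
    qed
    also have "\<dots> = (\<Sum>z<?N. if z = 0 then (cmod (v $ z))\<^sup>2 * ?N else 0)"
      by (intro sum.cong refl) (simp add: char_sum qdim_def)
    also have "\<dots> = ?N * (cmod (v $ 0))\<^sup>2" using N0 by (simp add: sum.delta)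
    finally show ?thesis .
  qed
  have fin: "finite (weyl_set n phi)"
  proof (rule finite_subset)
    show "weyl_set n phi \<subseteq> {..<?N} \<times> {..<?N}" unfolding weyl_set_def weyl_index_def by auto
  qed auto
  have "(stab_fidelity n psi)\<^sup>2 = ((\<Sum>b<?N. c b) / ?N)\<^sup>2"
    using fid sumc N0 by simp
  also have "\<dots> = (\<Sum>b<?N. c b)\<^sup>2 / ?N ^ 2" by (simp add: power_divide)
  also have "\<dots> \<le> (?N * (\<Sum>b<?N. (c b)\<^sup>2)) / ?N ^ 2"
    using cs_sum[of "{..<?N}" c] by (intro divide_right_mono) auto
  also have "\<dots> = (\<Sum>b<?N. (c b)\<^sup>2 / 2 ^ n)"
    using N0 by (simp add: power2_eq_square sum_divide_distrib qdim_def)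
  also have "\<dots> = (\<Sum>b<?N. p_psi n psi (y b))" by (intro sum.cong refl) (simp add: pc)
  also have "\<dots> = (\<Sum>x\<in>y ` {..<?N}. p_psi n psi x)" by (simp add: sum.reindex[OF yinj])
  also have "\<dots> \<le> (\<Sum>x \<in> weyl_set n phi. p_psi n psi x)"
    using fin yin p_nonneg[OF dpsi] by (intro sum_mono2) auto
  finally show ?thesis .
qed

end
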